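(* Let $(\mathcal{P},\cdot)$ be an admissible Poisson algebra such that the center of the Lie algebra $\mathfrak{g}_{\mathcal{P}}=(\mathcal{P},\{\,,\,\})$ is zero. Then $\mathcal{P}$ has no non-zero idempotent. If moreover $\mathcal{P}$ is finite-dimensional, then $\mathcal{P}$ is a nilalgebra.
   Context: $\mathbb{K}$ is a field of characteristic different from $2$ and $3$. Associator: $A(X,Y,Z)=(X\cdot Y)\cdot Z-X\cdot(Y\cdot Z)$. An admissible Poisson algebra is a $\mathbb{K}$-vector space $\mathcal{P}$ with a bilinear product $\cdot$ satisfying $3A(X,Y,Z)=(X\cdot Z)\cdot Y+(Y\cdot Z)\cdot X-(Y\cdot X)\cdot Z-(Z\cdot X)\cdot Y$ for all $X,Y,Z$. Its bracket is $\{X,Y\}=\frac12(X\cdot Y-Y\cdot X)$ (a Lie bracket), and $\mathfrak{g}_{\mathcal{P}}$ denotes $(\mathcal{P},\{\,,\,\})$. Powers: $X^1=X$, $X^{i+1}=X\cdot X^i$; $\mathcal{P}$ is a nilalgebra if for every $X$ there is $r$ with $X^r=0$. *)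

theory Defs
  imports Complex_Main
begin

definition bilinear_product :: "('k::field \<Rightarrow> 'v::ab_group_add \<Rightarrow> 'v) \<Rightarrow> ('v \<Rightarrow> 'v \<Rightarrow> 'v) \<Rightarrow> bool" where
  "bilinear_product scale mult \<longleftrightarrow>
     (\<forall>x y z. mult (x + y) z = mult x z + mult y z) \<and>
     (\<forall>x y z. mult x (y + z) = mult x y + mult x z) \<and>
     (\<forall>c x y. mult (scale c x) y = scale c (mult x y)) \<and>
     (\<forall>c x y. mult x (scale c y) = scale c (mult x y))"

definition assoc :: "('v \<Rightarrow> 'v \<Rightarrow> 'v) \<Rightarrow> 'v \<Rightarrow> 'v \<Rightarrow> 'v \<Rightarrow> 'v::ab_group_add" where
  "assoc mult x y z = mult (mult x y) z - mult x (mult y z)"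

definition admissible_poisson :: "('k::field \<Rightarrow> 'v::ab_group_add \<Rightarrow> 'v) \<Rightarrow> ('v \<Rightarrow> 'v \<Rightarrow> 'v) \<Rightarrow> bool" where
  "admissible_poisson scale mult \<longleftrightarrow>
     vector_space scale \<and> bilinear_product scale mult \<and>
     (\<forall>x y z. scale 3 (assoc mult x y z)
        = mult (mult x z) y + mult (mult y z) x - mult (mult y x) z - mult (mult z x) y)"

definition pbracket :: "('k::field \<Rightarrow> 'v::ab_group_add \<Rightarrow> 'v) \<Rightarrow> ('v \<Rightarrow> 'v \<Rightarrow> 'v) \<Rightarrow> 'v \<Rightarrow> 'v \<Rightarrow> 'v" where
  "pbracket scale mult x y = scale (1/2) (mult x y - mult y x)"

definition lie_center :: "('k::field \<Rightarrow> 'v::ab_group_add \<Rightarrow> 'v) \<Rightarrow> ('v \<Rightarrow> 'v \<Rightarrow> 'v) \<Rightarrow> 'v set" where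
  "lie_center scale mult = {z. \<forall>x. pbracket scale mult z x = 0}"

text \<open>Powers: ppow mult X n is X^n for n >= 1 (X^1 = X, X^(i+1) = X * X^i); the value at 0 is a dummy.\<close>
fun ppow :: "('v \<Rightarrow> 'v \<Rightarrow> 'v) \<Rightarrow> 'v \<Rightarrow> nat \<Rightarrow> 'v" where
  "ppow mult x 0 = x"
| "ppow mult x (Suc 0) = x"
| "ppow mult x (Suc (Suc n)) = mult x (ppow mult x (Suc n))"

definition nilalgebra :: "('v::zero \<Rightarrow> 'v \<Rightarrow> 'v) \<Rightarrow> bool" where
  "nilalgebra mult \<longleftrightarrow> (\<forall>x. \<exists>r\<ge>1. ppow mult x r = 0)"

definition finite_dim :: "('k::field \<Rightarrow> 'v::ab_group_add \<Rightarrow> 'v) \<Rightarrow> bool" where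
  "finite_dim scale \<longleftrightarrow> (\<exists>B. finite B \<and> module.span scale B = UNIV)"

end

theory Submission imports Defs begin

locale apa = vector_space scale for scale :: "'k::field \<Rightarrow> 'v::ab_group_add \<Rightarrow> 'v" +
  fixes mult :: "'v \<Rightarrow> 'v \<Rightarrow> 'v"
  assumes bil: "bilinear_product scale mult"
  and admid: "\<And>x y z. scale 3 (assoc mult x y z)
        = mult (mult x z) y + mult (mult y z) x - mult (mult y x) z - mult (mult z x) y"
  and char2: "(2::'k) \<noteq> 0" and char3: "(3::'k) \<noteq> 0"
begin

lemma addL: "mult (x + y) z = mult x z + mult y z" using bil unfolding bilinear_product_def by blast
lemma addR: "mult x (y + z) = mult x y + mult x z" using bil unfolding bilinear_product_def by blast
lemma scL: "mult (scale c x) y = scale c (mult x y)" using bil unfolding bilinear_product_def by blast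
lemma scR: "mult x (scale c y) = scale c (mult x y)" using bil unfolding bilinear_product_def by blast
lemma zeroL[simp]: "mult 0 y = 0" using addL[of 0 0 y] by simp
lemma zeroR[simp]: "mult y 0 = 0" using addR[of y 0 0] by simp
lemma minusL: "mult (- x) y = - mult x y"
proof -
  have "mult (-x) y + mult x y = 0" using addL[of "-x" x y] by simp
  then show ?thesis by (simp add: eq_neg_iff_add_eq_0)
qed
lemma minusR: "mult y (- x) = - mult y x"
proof -
  have "mult y (-x) + mult y x = 0" using addR[of y "-x" x] by simp
  then show ?thesis by (simp add: eq_neg_iff_add_eq_0)
qed
lemma diffL: "mult (x - y) z = mult x z - mult y z" by (simp only: diff_conv_add_uminus addL minusL)
lemma diffR: "mult z (x - y) = mult z x - mult z y" by (simp only: diff_conv_add_uminus addR minusR)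

lemmas bl = addL addR scL scR minusL minusR diffL diffR

lemma three: "scale 3 v = v + v + v"
proof -
  have e: "(1+1+1::'k) = 3" by simp
  have "scale (1+1+1) v = v + v + v" by (simp only: scale_left_distrib scale_one)
  from this[unfolded e] show ?thesis .
qed

lemma three0: "(v::'v) + v + v = 0 \<Longrightarrow> v = 0"
proof -
  assume "v + v + v = 0"
  then have "scale 3 v = 0" by (simp only: three)
  then show "v = 0" using char3 by simp
qed

lemma H: "(mult (mult x y) z - mult x (mult y z)) + (mult (mult x y) z - mult x (mult y z)) + (mult (mult x y) z - mult x (mult y z))
   - (mult (mult x z) y + mult (mult y z) x - mult (mult y x) z - mult (mult z x) y) = 0"
  using admid[of x y z] unfolding three assoc_def by (simp only: right_minus_eq)

definition s :: "'v \<Rightarrow> 'v \<Rightarrow> 'v" where "s x y = mult x y + mult y x"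
definition dd :: "'v \<Rightarrow> 'v \<Rightarrow> 'v" where "dd x y = mult x y - mult y x"
definition cm :: "'v \<Rightarrow> 'v \<Rightarrow> 'v" where "cm x y = scale (1/2) (s x y)"

definition F :: "'v \<Rightarrow> 'v \<Rightarrow> 'v \<Rightarrow> 'k \<Rightarrow> 'k \<Rightarrow> 'k \<Rightarrow> 'k \<Rightarrow> 'k \<Rightarrow> 'k \<Rightarrow> 'k \<Rightarrow> 'k \<Rightarrow> 'k \<Rightarrow> 'k \<Rightarrow> 'k \<Rightarrow> 'k \<Rightarrow> 'v" where
  "F x y z a0 a1 a2 a3 a4 a5 a6 a7 a8 a9 a10 a11 = scale a0 (mult (mult x y) z) + scale a1 (mult x (mult y z)) + scale a2 (mult (mult x z) y) + scale a3 (mult x (mult z y)) + scale a4 (mult (mult y x) z) + scale a5 (mult y (mult x z)) + scale a6 (mult (mult y z) x) + scale a7 (mult y (mult z x)) + scale a8 (mult (mult z x) y) + scale a9 (mult z (mult x y)) + scale a10 (mult (mult z y) x) + scale a11 (mult z (mult y x))"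

lemma F_lin: "scale c (F x y z a0 a1 a2 a3 a4 a5 a6 a7 a8 a9 a10 a11) + F x y z b0 b1 b2 b3 b4 b5 b6 b7 b8 b9 b10 b11 = F x y z (c * a0 + b0) (c * a1 + b1) (c * a2 + b2) (c * a3 + b3) (c * a4 + b4) (c * a5 + b5) (c * a6 + b6) (c * a7 + b7) (c * a8 + b8) (c * a9 + b9) (c * a10 + b10) (c * a11 + b11)"
  unfolding F_def by (simp only: scale_right_distrib scale_scale scale_left_distrib add_ac)

lemma F_zero: "F x y z 0 0 0 0 0 0 0 0 0 0 0 0 = 0" unfolding F_def by simp

lemma Hf0: "F x y z 3 (-3) (-1) 0 1 0 (-1) 0 1 0 0 0 = 0"
proof -
  have "F x y z 3 (-3) (-1) 0 1 0 (-1) 0 1 0 0 0 = scale 3 (assoc mult x y z) - (mult (mult x z) y + mult (mult y z) x - mult (mult y x) z - mult (mult z x) y)"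
    unfolding assoc_def by (simp only: F_def scale_right_diff_distrib scale_right_distrib scale_minus_right scale_minus_left scale_one scale_zero_left diff_conv_add_uminus minus_add_distrib minus_minus add_0_left add_0_right add_ac)
  then show ?thesis using admid[of x y z] by simp
qed

lemma Hf1: "F x y z (-1) 0 3 (-3) 1 0 0 0 1 0 (-1) 0 = 0"
proof -
  have "F x y z (-1) 0 3 (-3) 1 0 0 0 1 0 (-1) 0 = scale 3 (assoc mult x z y) - (mult (mult x y) z + mult (mult z y) x - mult (mult z x) y - mult (mult y x) z)"
    unfolding assoc_def by (simp only: F_def scale_right_diff_distrib scale_right_distrib scale_minus_right scale_minus_left scale_one scale_zero_left diff_conv_add_uminus minus_add_distrib minus_minus add_0_left add_0_right add_ac)
  then show ?thesis using admid[of x z y] by simp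
qed

lemma Hf2: "F x y z 1 0 (-1) 0 3 (-3) (-1) 0 0 0 1 0 = 0"
proof -
  have "F x y z 1 0 (-1) 0 3 (-3) (-1) 0 0 0 1 0 = scale 3 (assoc mult y x z) - (mult (mult y z) x + mult (mult x z) y - mult (mult x y) z - mult (mult z y) x)"
    unfolding assoc_def by (simp only: F_def scale_right_diff_distrib scale_right_distrib scale_minus_right scale_minus_left scale_one scale_zero_left diff_conv_add_uminus minus_add_distrib minus_minus add_0_left add_0_right add_ac)
  then show ?thesis using admid[of y x z] by simp
qed

lemma Hf3: "F x y z 1 0 0 0 (-1) 0 3 (-3) (-1) 0 1 0 = 0"
proof -
  have "F x y z 1 0 0 0 (-1) 0 3 (-3) (-1) 0 1 0 = scale 3 (assoc mult y z x) - (mult (mult y x) z + mult (mult z x) y - mult (mult z y) x - mult (mult x y) z)"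
    unfolding assoc_def by (simp only: F_def scale_right_diff_distrib scale_right_distrib scale_minus_right scale_minus_left scale_one scale_zero_left diff_conv_add_uminus minus_add_distrib minus_minus add_0_left add_0_right add_ac)
  then show ?thesis using admid[of y z x] by simp
qed

lemma Hf4: "F x y z (-1) 0 1 0 0 0 1 0 3 (-3) (-1) 0 = 0"
proof -
  have "F x y z (-1) 0 1 0 0 0 1 0 3 (-3) (-1) 0 = scale 3 (assoc mult z x y) - (mult (mult z y) x + mult (mult x y) z - mult (mult x z) y - mult (mult y z) x)"
    unfolding assoc_def by (simp only: F_def scale_right_diff_distrib scale_right_distrib scale_minus_right scale_minus_left scale_one scale_zero_left diff_conv_add_uminus minus_add_distrib minus_minus add_0_left add_0_right add_ac)
  then show ?thesis using admid[of z x y] by simp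
qed

lemma Hf5: "F x y z 0 0 1 0 (-1) 0 1 0 (-1) 0 3 (-3) = 0"
proof -
  have "F x y z 0 0 1 0 (-1) 0 1 0 (-1) 0 3 (-3) = scale 3 (assoc mult z y x) - (mult (mult z x) y + mult (mult y x) z - mult (mult y z) x - mult (mult x z) y)"
    unfolding assoc_def by (simp only: F_def scale_right_diff_distrib scale_right_distrib scale_minus_right scale_minus_left scale_one scale_zero_left diff_conv_add_uminus minus_add_distrib minus_minus add_0_left add_0_right add_ac)
  then show ?thesis using admid[of z y x] by simp
qed

lemma assocF: "F x y z 1 (-1) 0 (-1) 1 0 (-1) 0 0 1 (-1) 1 = 0"
proof -
  have e1: "scale (1) (F x y z 3 (-3) (-1) 0 1 0 (-1) 0 1 0 0 0) + (scale (1) (F x y z (-1) 0 3 (-3) 1 0 0 0 1 0 (-1) 0) + (scale (0) (F x y z 1 0 (-1) 0 3 (-3) (-1) 0 0 0 1 0) + (scale (0) (F x y z 1 0 0 0 (-1) 0 3 (-3) (-1) 0 1 0) + (scale (-1) (F x y z (-1) 0 1 0 0 0 1 0 3 (-3) (-1) 0) + (scale (-1) (F x y z 0 0 1 0 (-1) 0 1 0 (-1) 0 3 (-3)) + (F x y z 0 0 0 0 0 0 0 0 0 0 0 0)))))) = 0" by (simp only: Hf0 Hf1 Hf2 Hf3 Hf4 Hf5 F_zero scale_zero_right add_0_left)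
  have e2: "scale (1) (F x y z 3 (-3) (-1) 0 1 0 (-1) 0 1 0 0 0) + (scale (1) (F x y z (-1) 0 3 (-3) 1 0 0 0 1 0 (-1) 0) + (scale (0) (F x y z 1 0 (-1) 0 3 (-3) (-1) 0 0 0 1 0) + (scale (0) (F x y z 1 0 0 0 (-1) 0 3 (-3) (-1) 0 1 0) + (scale (-1) (F x y z (-1) 0 1 0 0 0 1 0 3 (-3) (-1) 0) + (scale (-1) (F x y z 0 0 1 0 (-1) 0 1 0 (-1) 0 3 (-3)) + (F x y z 0 0 0 0 0 0 0 0 0 0 0 0)))))) = F x y z 3 (-3) 0 (-3) 3 0 (-3) 0 0 3 (-3) 3" by (simp only: F_lin) simp
  have e3: "scale 3 (F x y z 1 (-1) 0 (-1) 1 0 (-1) 0 0 1 (-1) 1) + F x y z 0 0 0 0 0 0 0 0 0 0 0 0 = F x y z 3 (-3) 0 (-3) 3 0 (-3) 0 0 3 (-3) 3" by (simp only: F_lin) simp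
  have e4: "F x y z 3 (-3) 0 (-3) 3 0 (-3) 0 0 3 (-3) 3 = 0" by (metis e1 e2)
  have "scale 3 (F x y z 1 (-1) 0 (-1) 1 0 (-1) 0 0 1 (-1) 1) + 0 = 0" by (metis e3 e4 F_zero)
  then show ?thesis using char3 by simp
qed

lemma leibF: "F x y z (-1) 1 (-1) 1 1 (-1) (-1) 1 1 (-1) (-1) 1 = 0"
proof -
  have e1: "scale (-1) (F x y z 3 (-3) (-1) 0 1 0 (-1) 0 1 0 0 0) + (scale (-1) (F x y z (-1) 0 3 (-3) 1 0 0 0 1 0 (-1) 0) + (scale (1) (F x y z 1 0 (-1) 0 3 (-3) (-1) 0 0 0 1 0) + (scale (-1) (F x y z 1 0 0 0 (-1) 0 3 (-3) (-1) 0 1 0) + (scale (1) (F x y z (-1) 0 1 0 0 0 1 0 3 (-3) (-1) 0) + (scale (-1) (F x y z 0 0 1 0 (-1) 0 1 0 (-1) 0 3 (-3)) + (F x y z 0 0 0 0 0 0 0 0 0 0 0 0)))))) = 0" by (simp only: Hf0 Hf1 Hf2 Hf3 Hf4 Hf5 F_zero scale_zero_right add_0_left)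
  have e2: "scale (-1) (F x y z 3 (-3) (-1) 0 1 0 (-1) 0 1 0 0 0) + (scale (-1) (F x y z (-1) 0 3 (-3) 1 0 0 0 1 0 (-1) 0) + (scale (1) (F x y z 1 0 (-1) 0 3 (-3) (-1) 0 0 0 1 0) + (scale (-1) (F x y z 1 0 0 0 (-1) 0 3 (-3) (-1) 0 1 0) + (scale (1) (F x y z (-1) 0 1 0 0 0 1 0 3 (-3) (-1) 0) + (scale (-1) (F x y z 0 0 1 0 (-1) 0 1 0 (-1) 0 3 (-3)) + (F x y z 0 0 0 0 0 0 0 0 0 0 0 0)))))) = F x y z (-3) 3 (-3) 3 3 (-3) (-3) 3 3 (-3) (-3) 3" by (simp only: F_lin) simp
  have e3: "scale 3 (F x y z (-1) 1 (-1) 1 1 (-1) (-1) 1 1 (-1) (-1) 1) + F x y z 0 0 0 0 0 0 0 0 0 0 0 0 = F x y z (-3) 3 (-3) 3 3 (-3) (-3) 3 3 (-3) (-3) 3" by (simp only: F_lin) simp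
  have e4: "F x y z (-3) 3 (-3) 3 3 (-3) (-3) 3 3 (-3) (-3) 3 = 0" by (metis e1 e2)
  have "scale 3 (F x y z (-1) 1 (-1) 1 1 (-1) (-1) 1 1 (-1) (-1) 1) + 0 = 0" by (metis e3 e4 F_zero)
  then show ?thesis using char3 by simp
qed

lemma s_assoc: "s (s x y) z = s x (s y z)"
proof -
  have "s (s x y) z - s x (s y z) = F x y z 1 (-1) 0 (-1) 1 0 (-1) 0 0 1 (-1) 1"
    unfolding s_def by (simp only: addL addR diffL diffR minusL minusR F_def scale_minus_left scale_one scale_zero_left diff_conv_add_uminus minus_add_distrib minus_minus add_0_left add_0_right add_ac)
  then show ?thesis using assocF by simp
qed

lemma leib_s: "dd x (s y z) = s (dd x y) z + s y (dd x z)"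
proof -
  have "dd x (s y z) - (s (dd x y) z + s y (dd x z)) = F x y z (-1) 1 (-1) 1 1 (-1) (-1) 1 1 (-1) (-1) 1"
    unfolding s_def dd_def by (simp only: addL addR diffL diffR minusL minusR F_def scale_minus_left scale_one scale_zero_left diff_conv_add_uminus minus_add_distrib minus_minus add_0_left add_0_right add_ac)
  then show ?thesis using leibF by simp
qed

lemma s_scL: "s (scale c a) b = scale c (s a b)" by (simp add: s_def scL scR scale_right_distrib)
lemma s_scR: "s a (scale c b) = scale c (s a b)" by (simp add: s_def scL scR scale_right_distrib)
lemma dd_scR: "dd a (scale c b) = scale c (dd a b)" by (simp add: dd_def scL scR scale_right_diff_distrib)

lemma cm_comm: "cm x y = cm y x" by (simp add: cm_def s_def add.commute)

lemma cm_assoc: "cm (cm x y) z = cm x (cm y z)"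
  by (simp add: cm_def s_scL s_scR s_assoc)

lemma leib: "dd x (cm y z) = cm (dd x y) z + cm y (dd x z)"
  by (simp add: cm_def dd_scR leib_s scale_right_distrib)

lemma half_half: "scale (1/2) (v + v) = v"
proof -
  have "scale (1+1) v = v + v" by (simp only: scale_left_distrib scale_one)
  moreover have e: "(1+1::'k) = 2" by simp
  ultimately have "v + v = scale 2 v" by (simp only: e)
  then show ?thesis using char2 by simp
qed

lemma mult_split: "mult x y = cm x y + scale (1/2) (dd x y)"
proof -
  have "cm x y + scale (1/2) (dd x y) = scale (1/2) ((mult x y + mult y x) + (mult x y - mult y x))"
    by (simp only: cm_def s_def dd_def scale_right_distrib[symmetric])
  also have "(mult x y + mult y x) + (mult x y - mult y x) = mult x y + mult x y" by simp
  finally show ?thesis using half_half by simp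
qed

lemma mult_cm: "dd x y = 0 \<Longrightarrow> mult x y = cm x y"
  using mult_split by simp

lemma cm0L[simp]: "cm 0 a = 0" by (simp add: cm_def s_def)
lemma cm0R[simp]: "cm a 0 = 0" by (simp add: cm_def s_def)
lemma s_addR: "s a (b + c) = s a b + s a c" by (simp add: s_def addL addR add_ac)
lemma cm_addR: "cm a (b + c) = cm a b + cm a c" by (simp add: cm_def s_addR scale_right_distrib)
lemma cm_scR: "cm a (scale c b) = scale c (cm a b)" by (simp add: cm_def s_scR)
lemma dd_self[simp]: "dd x x = 0" by (simp add: dd_def)

lemma idem_zero:
  assumes center: "lie_center scale mult = {0}" and e: "mult e e = e"
  shows "e = 0"
proof -
  have ee: "cm e e = e" using e mult_cm[of e e] by simp
  have "dd x e = 0" for x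
  proof -
    let ?a = "dd x e"
    have "?a = cm e ?a + cm e ?a" using leib[of x e e] ee cm_comm[of ?a e] by simp
    then have "cm e ?a = cm e (cm e ?a) + cm e (cm e ?a)" by (metis cm_addR)
    also have "cm e (cm e ?a) = cm e ?a" by (metis cm_assoc ee)
    finally have "cm e ?a = 0" by simp
    then show ?thesis using \<open>?a = cm e ?a + cm e ?a\<close> by simp
  qed
  then have "pbracket scale mult e x = 0" for x
    by (metis pbracket_def dd_def minus_diff_eq neg_equal_0_iff_equal scale_zero_right)
  then have "e \<in> lie_center scale mult" by (simp add: lie_center_def)
  then show ?thesis using center by simp
qed

lemma pow_step: "n \<ge> 1 \<Longrightarrow> dd x (ppow mult x n) = 0 \<and> ppow mult x (Suc n) = cm x (ppow mult x n)"
proof (induction n rule: nat_induct_at_least)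
  case base
  then show ?case using mult_cm[of x x] by simp
next
  case (Suc n)
  then obtain m where m: "n = Suc m" by (cases n) auto
  have "dd x (ppow mult x (Suc n)) = 0" using Suc leib[of x x "ppow mult x n"] by simp
  then show ?case using mult_cm m by simp
qed

lemma pow_add: "cm (ppow mult x (Suc k)) (ppow mult x j) = ppow mult x (Suc k + j)" if "j \<ge> 1"
proof (induction k)
  case 0
  then show ?case using pow_step[OF that] by simp
next
  case (Suc k)
  have "cm (ppow mult x (Suc (Suc k))) (ppow mult x j) = cm (cm x (ppow mult x (Suc k))) (ppow mult x j)"
    using pow_step[of "Suc k" x] by simp
  also have "\<dots> = cm x (ppow mult x (Suc k + j))" using Suc by (simp add: cm_assoc)
  also have "\<dots> = ppow mult x (Suc (Suc k) + j)" using pow_step[of "Suc k + j" x] by simp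
  finally show ?case .
qed


lemma fitting:
  assumes fd: "finite_dim scale"
  shows "\<exists>N\<ge>1. \<exists>a. ppow mult x N = cm (ppow mult x (N + N)) a"
proof -
  obtain B where B: "finite B" "span B = UNIV" using fd unfolding finite_dim_def by blast
  obtain C where C: "C \<subseteq> B" "independent C" "B \<subseteq> span C" using maximal_independent_subset[of B] by blast
  have finC: "finite C" using C(1) B(1) finite_subset by blast
  have spC: "span C = UNIV"
  proof -
    have "span B \<subseteq> span (span C)" using C(3) span_mono by blast
    then show ?thesis using B(2) span_span by auto
  qed
  interpret fdv: finite_dimensional_vector_space scale C
    by unfold_locales (use finC C(2) spC in auto)
  define Q where "Q n = ppow mult x n" for n
  define V where "V i = range (cm (Q (Suc i)))" for i
  have subV: "subspace (V i)" for i
    unfolding subspace_def V_def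
  proof (intro conjI ballI allI)
    show "0 \<in> range (cm (Q (Suc i)))" by (metis cm0R rangeI)
  next
    fix u v assume "u \<in> range (cm (Q (Suc i)))" "v \<in> range (cm (Q (Suc i)))"
    then obtain a b where "u = cm (Q (Suc i)) a" "v = cm (Q (Suc i)) b" by blast
    then show "u + v \<in> range (cm (Q (Suc i)))" by (metis cm_addR rangeI)
  next
    fix c u assume "u \<in> range (cm (Q (Suc i)))"
    then obtain a where "u = cm (Q (Suc i)) a" by blast
    then show "scale c u \<in> range (cm (Q (Suc i)))" by (metis cm_scR rangeI)
  qed
  have Vstep: "V (Suc i) \<subseteq> V i" for i
  proof
    fix u assume "u \<in> V (Suc i)"
    then obtain a where u: "u = cm (Q (Suc (Suc i))) a" unfolding V_def by blast
    have "Q (Suc (Suc i)) = cm x (Q (Suc i))" unfolding Q_def using pow_step[of "Suc i" x] by simp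
    then have "u = cm (Q (Suc i)) (cm x a)" using u by (metis cm_assoc cm_comm)
    then show "u \<in> V i" unfolding V_def by blast
  qed
  have Vmono: "i \<le> j \<Longrightarrow> V j \<subseteq> V i" for i j
    using lift_Suc_antimono_le[of V, OF Vstep] by blast
  define d where "d i = dim (V i)" for i
  obtain M where M: "\<forall>i. d M \<le> d i" using ex_has_least_nat[of "\<lambda>_. True" 0 d] by blast
  define j where "j = 2 * M + 3"
  have "V j \<subseteq> V M" using Vmono by (simp add: j_def)
  moreover have "dim (V M) \<le> dim (V j)" using M d_def by metis
  ultimately have "span (V j) = span (V M)" using fdv.dim_eq_span by blast
  then have VjM: "V j = V M" using subV[of j] subV[of M] by (metis span_eq_iff)
  have "Q (Suc (Suc M)) = cm (Q (Suc M)) x" unfolding Q_def using pow_step[of "Suc M" x] cm_comm by simp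
  then have "Q (Suc (Suc M)) \<in> V M" unfolding V_def by blast
  then have "Q (Suc (Suc M)) \<in> V j" using VjM by simp
  then obtain a where "Q (Suc (Suc M)) = cm (Q (Suc j)) a" unfolding V_def by blast
  moreover have "Suc j = Suc (Suc M) + Suc (Suc M)" by (simp add: j_def)
  ultimately have "ppow mult x (Suc (Suc M)) = cm (ppow mult x (Suc (Suc M) + Suc (Suc M))) a"
    unfolding Q_def by simp
  then show ?thesis by (intro exI[of _ "Suc (Suc M)"]) auto
qed

lemma nil:
  assumes center: "lie_center scale mult = {0}" and fd: "finite_dim scale"
  shows "nilalgebra mult"
  unfolding nilalgebra_def
proof
  fix x
  obtain N a where N: "N \<ge> 1" and QN: "ppow mult x N = cm (ppow mult x (N + N)) a"
    using fitting[OF fd, of x] by blast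
  obtain k where k: "N = Suc k" using N by (cases N) auto
  let ?q = "ppow mult x N"
  have qq: "cm ?q ?q = ppow mult x (N + N)" using pow_add[where k=k and j=N and x=x] N k by simp
  define e where "e = cm ?q a"
  have "cm e e = cm (cm (cm ?q ?q) a) a" unfolding e_def by (metis cm_assoc cm_comm)
  also have "\<dots> = e" unfolding e_def using qq QN by simp
  finally have ee: "cm e e = e" .
  have "mult e e = e" using mult_cm[of e e] ee by simp
  then have e0: "e = 0" using idem_zero[OF center] by blast
  have "cm ?q e = cm (cm ?q ?q) a" unfolding e_def by (metis cm_assoc)
  also have "\<dots> = ?q" using qq QN by simp
  finally have "?q = cm ?q e" by simp
  then have "?q = 0" using e0 by simp
  then show "\<exists>r\<ge>1. ppow mult x r = 0" using N by blast
qed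

end

theorem mainTheorem5:
  fixes scale :: "'k::field \<Rightarrow> 'v::ab_group_add \<Rightarrow> 'v"
    and mult :: "'v \<Rightarrow> 'v \<Rightarrow> 'v"
  assumes char2: "(2::'k) \<noteq> 0" and char3: "(3::'k) \<noteq> 0"
    and adm: "admissible_poisson scale mult"
    and center: "lie_center scale mult = {0}"
  shows "(\<forall>e. mult e e = e \<longrightarrow> e = 0) \<and> (finite_dim scale \<longrightarrow> nilalgebra mult)"
proof -
  interpret apa scale mult
    using adm char2 char3 unfolding admissible_poisson_def apa_def apa_axioms_def by blast
  show ?thesis using idem_zero[OF center] nil[OF center] by blast
qed

end
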